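(* Let $k$ be a field and $\Gamma\subset SL(2,k)$ a subgroup containing an element whose eigenvalues (in $\overline k$) have infinite order in $\overline k^{*}$. Then $\Gamma$ is Zariski-dense in $SL(2)$ if and only if there exist $\alpha,\beta\in\Gamma$ such that $$\mathrm{Tr}(\alpha^2\beta^2\alpha^2\beta^2)-\mathrm{Tr}(\alpha^4\beta^4)\neq 0.$$ *)

theory Defs
  imports "HOL-Analysis.Analysis" "HOL-Algebra.Algebraic_Closure_Type"
begin

definition SL2 :: "(('k::field)^2^2) set" where
  "SL2 = {A. det A = 1}"

definition subgroup_SL2 :: "(('k::field)^2^2) set \<Rightarrow> bool" where
  "subgroup_SL2 G \<longleftrightarrow> G \<subseteq> SL2 \<and> mat 1 \<in> G \<and>
     (\<forall>a\<in>G. \<forall>b\<in>G. a ** b \<in> G) \<and> (\<forall>a\<in>G. \<exists>b\<in>G. a ** b = mat 1)"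

primrec mpow :: "('k::semiring_1)^'n^'n \<Rightarrow> nat \<Rightarrow> 'k^'n^'n" where
  "mpow A 0 = mat 1"
| "mpow A (Suc n) = A ** mpow A n"

definition ac_mat :: "('k::field)^2^2 \<Rightarrow> 'k alg_closure^2^2" where
  "ac_mat A = (\<chi> i j. to_ac (A $ i $ j))"

definition eigenvalue_ac :: "('k::field)^2^2 \<Rightarrow> 'k alg_closure \<Rightarrow> bool" where
  "eigenvalue_ac A x \<longleftrightarrow> det (ac_mat A - mat x) = 0"

inductive_set poly_fun :: "(('a::comm_ring_1)^2^2 \<Rightarrow> 'a) set" where
  const: "(\<lambda>A. c) \<in> poly_fun"
| coord: "(\<lambda>A. A $ i $ j) \<in> poly_fun"
| add: "p \<in> poly_fun \<Longrightarrow> q \<in> poly_fun \<Longrightarrow> (\<lambda>A. p A + q A) \<in> poly_fun"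
| mult: "p \<in> poly_fun \<Longrightarrow> q \<in> poly_fun \<Longrightarrow> (\<lambda>A. p A * q A) \<in> poly_fun"

text \<open>Zariski density in SL(2): every polynomial (over the algebraic closure) vanishing
  on Gamma vanishes on all of SL(2) (points over the algebraic closure).\<close>
definition zariski_dense_SL2 :: "(('k::field)^2^2) set \<Rightarrow> bool" where
  "zariski_dense_SL2 G \<longleftrightarrow>
     (\<forall>p\<in>poly_fun. (\<forall>g\<in>G. p (ac_mat g) = 0) \<longrightarrow> (\<forall>A\<in>SL2. p A = 0))"

end

theory Submission
  imports Defs
begin

definition mk :: "'a::zero \<Rightarrow> 'a \<Rightarrow> 'a \<Rightarrow> 'a \<Rightarrow> 'a^2^2" where
  "mk a b c d = (\<chi> i j. if i = 1 then (if j = 1 then a else b) else (if j = 1 then c else d))"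

lemma two_ne_one[simp]: "(2::2) \<noteq> 1" "(1::2) \<noteq> 2" by simp_all

lemma mk_nth[simp]: "mk a b c d $ 1 $ 1 = a" "mk a b c d $ 1 $ 2 = b"
  "mk a b c d $ 2 $ 1 = c" "mk a b c d $ 2 $ 2 = d"
  by (simp_all add: mk_def)

lemma mk_eta: "A = mk (A$1$1) (A$1$2) (A$2$1) (A$2$2)"
  by (simp add: vec_eq_iff forall_2)

lemma mk_eq_iff[simp]: "mk a b c d = mk a' b' c' d' \<longleftrightarrow> a = a' \<and> b = b' \<and> c = c' \<and> d = d'"
  by (auto simp add: vec_eq_iff forall_2)

lemma mk_mult[simp]: "mk a b c d ** mk a' b' c' d' = mk (a*a'+b*c') (a*b'+b*d') (c*a'+d*c') (c*b'+d*d')"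
  by (simp add: vec_eq_iff forall_2 matrix_matrix_mult_def sum_2)

lemma mat_mk: "mat x = mk x 0 0 x"
  by (simp add: vec_eq_iff forall_2 mat_def)

lemma det_mk[simp]: "det (mk a b c d) = a*d - b*c"
  by (simp add: det_2)

lemma trace_mk[simp]: "trace (mk a b c d) = a + d"
  by (simp add: trace_def sum_2)

lemma mk_diff[simp]: "mk a b c d - mk a' b' c' d' = mk (a-a') (b-b') (c-c') (d-d')"
  by (simp add: vec_eq_iff forall_2)

section \<open>Polynomial functions\<close>

definition pm :: "(('a::comm_ring_1)^2^2 \<Rightarrow> 'a^2^2) \<Rightarrow> bool" where
  "pm F \<longleftrightarrow> (\<forall>i j. (\<lambda>A. F A $ i $ j) \<in> poly_fun)"

lemma poly_comp:
  assumes "p \<in> poly_fun" "pm F" shows "(\<lambda>A. p (F A)) \<in> poly_fun"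
  using assms(1)
proof induction
  case (const c) then show ?case by (rule poly_fun.const)
next
  case (coord i j) then show ?case using assms(2) by (simp add: pm_def)
next
  case (add p q) then show ?case using poly_fun.add[of "\<lambda>A. p (F A)" "\<lambda>A. q (F A)"] by simp
next
  case (mult p q) then show ?case using poly_fun.mult[of "\<lambda>A. p (F A)" "\<lambda>A. q (F A)"] by simp
qed

lemma poly_neg: "p \<in> poly_fun \<Longrightarrow> (\<lambda>A. - p A) \<in> poly_fun"
proof -
  assume "p \<in> poly_fun"
  from poly_fun.mult[OF poly_fun.const[of "-1"] this] show ?thesis by simp
qed

lemma poly_sub: "p \<in> poly_fun \<Longrightarrow> q \<in> poly_fun \<Longrightarrow> (\<lambda>A. p A - q A) \<in> poly_fun"
proof -
  assume "p \<in> poly_fun" "q \<in> poly_fun"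
  from poly_fun.add[OF this(1) poly_neg[OF this(2)]] show ?thesis by simp
qed

lemma pm_const: "pm (\<lambda>A. M)"
  by (simp add: pm_def poly_fun.const)

lemma pm_id: "pm (\<lambda>A. A)"
  by (simp add: pm_def poly_fun.coord)

lemma pm_mult: "pm F \<Longrightarrow> pm G \<Longrightarrow> pm (\<lambda>A. F A ** G A)"
  unfolding pm_def matrix_matrix_mult_def
  by (simp add: sum_2 poly_fun.add poly_fun.mult)

lemma pm_mk: "f \<in> poly_fun \<Longrightarrow> g \<in> poly_fun \<Longrightarrow> h \<in> poly_fun \<Longrightarrow> k \<in> poly_fun \<Longrightarrow>
   pm (\<lambda>A. mk (f A) (g A) (h A) (k A))"
  unfolding pm_def
proof (intro allI)
  fix i j :: 2
  assume "f \<in> poly_fun" "g \<in> poly_fun" "h \<in> poly_fun" "k \<in> poly_fun"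
  then show "(\<lambda>A. mk (f A) (g A) (h A) (k A) $ i $ j) \<in> poly_fun"
    using exhaust_2[of i] exhaust_2[of j] by (elim disjE) simp_all
qed

lemma pm_mpow: "pm F \<Longrightarrow> pm (\<lambda>A. mpow (F A) n)"
  by (induction n) (auto intro: pm_mult pm_const)

lemma poly_trace: "pm F \<Longrightarrow> (\<lambda>A. trace (F A)) \<in> poly_fun"
  unfolding pm_def trace_def by (simp add: sum_2 poly_fun.add)

lemma poly_det: "(\<lambda>A::('a::comm_ring_1)^2^2. det A) \<in> poly_fun"
  unfolding det_2 by (intro poly_sub poly_fun.mult poly_fun.coord)

definition adj2 :: "('a::comm_ring_1)^2^2 \<Rightarrow> 'a^2^2" where
  "adj2 A = mk (A$2$2) (- A$1$2) (- A$2$1) (A$1$1)"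

lemma adj2_mk[simp]: "adj2 (mk a b c d) = mk d (-b) (-c) a"
  by (simp add: adj2_def)

lemma pm_adj2: "pm (adj2 :: ('a::comm_ring_1)^2^2 \<Rightarrow> _)"
  unfolding adj2_def
  by (intro pm_mk poly_neg poly_fun.coord)

lemma mpow_2: "mpow A 2 = A ** A"
  by (simp add: numeral_2_eq_2)

lemma mpow_4: "mpow A 4 = A ** A ** A ** A"
proof -
  have "(4::nat) = Suc (Suc (Suc (Suc 0)))" by simp
  then show ?thesis by (simp only: mpow.simps matrix_mul_rid matrix_mul_assoc)
qed

lemma mk_cases: "\<exists>a b c d. A = mk a b c d"
  using mk_eta by blast


section \<open>Embedding into the algebraic closure\<close>

lemma ac_nth[simp]: "ac_mat A $ i $ j = to_ac (A $ i $ j)"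
  by (simp add: ac_mat_def)

lemma ac_mk[simp]: "ac_mat (mk a b c d) = mk (to_ac a) (to_ac b) (to_ac c) (to_ac d)"
  by (simp add: vec_eq_iff forall_2)

lemma ac_mult: "ac_mat (A ** B) = ac_mat A ** ac_mat B"
  by (simp add: vec_eq_iff matrix_matrix_mult_def to_ac_sum)

lemma ac_one: "ac_mat (mat 1) = mat 1"
  by (simp add: vec_eq_iff mat_def)

lemma ac_mpow: "ac_mat (mpow A n) = mpow (ac_mat A) n"
  by (induction n) (simp_all add: ac_mult ac_one)

lemma ac_trace: "trace (ac_mat A) = to_ac (trace A)"
  using mk_cases[of A] by auto

lemma ac_det: "det (ac_mat A) = to_ac (det A)"
  using mk_cases[of A] by auto

lemma ac_adj2: "ac_mat (adj2 A) = adj2 (ac_mat A)"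
  using mk_cases[of A] by auto

section \<open>Zariski closure\<close>

definition clo :: "(('a::comm_ring_1)^2^2) set \<Rightarrow> ('a^2^2) set" where
  "clo S = {A. \<forall>p\<in>poly_fun. (\<forall>s\<in>S. p s = 0) \<longrightarrow> p A = 0}"

lemma clo_sup: "S \<subseteq> clo S"
  by (auto simp: clo_def)

lemma clo_map:
  assumes "pm F" "\<forall>s\<in>S. F s \<in> clo S" "A \<in> clo S"
  shows "F A \<in> clo S"
  unfolding clo_def
proof (intro CollectI ballI impI)
  fix p :: "_ \<Rightarrow> _" assume p: "p \<in> poly_fun" and van: "\<forall>s\<in>S. p s = 0"
  have "(\<lambda>Y. p (F Y)) \<in> poly_fun" by (rule poly_comp[OF p assms(1)])
  moreover have "\<forall>s\<in>S. p (F s) = 0" using assms(2) p van by (auto simp: clo_def)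
  ultimately show "p (F A) = 0" using assms(3) by (auto simp: clo_def)
qed

lemma clo_mult:
  assumes "\<forall>a\<in>S. \<forall>b\<in>S. a ** b \<in> S" "A \<in> clo S" "B \<in> clo S"
  shows "A ** B \<in> clo S"
proof -
  have "\<forall>s\<in>S. s ** B \<in> clo S"
  proof
    fix s assume s: "s \<in> S"
    show "s ** B \<in> clo S"
      by (rule clo_map[OF pm_mult[OF pm_const pm_id] _ assms(3)])
         (use s assms(1) clo_sup in blast)
  qed
  then show ?thesis
    by (intro clo_map[OF pm_mult[OF pm_id pm_const] _ assms(2)])
qed

lemma clo_adj2:
  assumes "\<forall>a\<in>S. adj2 a \<in> S" "A \<in> clo S"
  shows "adj2 A \<in> clo S"
  by (rule clo_map[OF pm_adj2 _ assms(2)]) (use assms(1) clo_sup in blast)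


lemma clo_SL2:
  assumes "S \<subseteq> {A. det A = 1}" "A \<in> clo S"
  shows "det A = 1"
proof -
  have "(\<lambda>A. det A - 1) \<in> poly_fun" by (intro poly_sub poly_det poly_fun.const)
  then show ?thesis using assms by (force simp: clo_def)
qed

lemma dense_iff: "zariski_dense_SL2 G \<longleftrightarrow> SL2 \<subseteq> clo (ac_mat ` G)"
  unfolding zariski_dense_SL2_def clo_def by auto



section \<open>Laurent families\<close>

definition Lf :: "(2 \<Rightarrow> 2 \<Rightarrow> 'a) \<Rightarrow> (2 \<Rightarrow> 2 \<Rightarrow> 'a) \<Rightarrow> 'a \<Rightarrow> ('a::field)^2^2" where
  "Lf \<alpha> \<beta> t = (\<chi> i j. \<alpha> i j * t + \<beta> i j / t)"

lemma laurent:
  assumes "p \<in> poly_fun"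
  shows "\<exists>N r. \<forall>t. t \<noteq> 0 \<longrightarrow> t ^ N * p (Lf \<alpha> \<beta> t) = poly r t"
  using assms
proof induction
  case (const c)
  show ?case by (rule exI[of _ 0], rule exI[of _ "[:c:]"]) simp
next
  case (coord i j)
  show ?case
  proof (rule exI[of _ 1], rule exI[of _ "[:\<beta> i j, 0, \<alpha> i j:]"], intro allI impI)
    fix t :: 'a assume t: "t \<noteq> 0"
    have "t ^ 1 * Lf \<alpha> \<beta> t $ i $ j = t * (\<alpha> i j * t + \<beta> i j / t)" by (simp add: Lf_def)
    also have "\<dots> = \<beta> i j + t * (t * \<alpha> i j)" using t by (simp add: field_simps)
    finally show "t ^ 1 * Lf \<alpha> \<beta> t $ i $ j = poly [:\<beta> i j, 0, \<alpha> i j:] t" by simp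
  qed
next
  case (add p q)
  obtain N1 r1 where 1: "\<forall>t. t \<noteq> 0 \<longrightarrow> t ^ N1 * p (Lf \<alpha> \<beta> t) = poly r1 t"
    using add.IH(1) by (elim exE)
  obtain N2 r2 where 2: "\<forall>t. t \<noteq> 0 \<longrightarrow> t ^ N2 * q (Lf \<alpha> \<beta> t) = poly r2 t"
    using add.IH(2) by (elim exE)
  show ?case
  proof (rule exI[of _ "N1 + N2"], rule exI[of _ "Polynomial.monom 1 N2 * r1 + Polynomial.monom 1 N1 * r2"], intro allI impI)
    fix t :: 'a assume t: "t \<noteq> 0"
    have "t ^ (N1 + N2) * (p (Lf \<alpha> \<beta> t) + q (Lf \<alpha> \<beta> t)) =
      t ^ N2 * (t ^ N1 * p (Lf \<alpha> \<beta> t)) + t ^ N1 * (t ^ N2 * q (Lf \<alpha> \<beta> t))"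
      by (simp add: power_add algebra_simps)
    also have "\<dots> = t ^ N2 * poly r1 t + t ^ N1 * poly r2 t"
      by (simp only: 1[rule_format, OF t] 2[rule_format, OF t])
    also have "\<dots> = poly (Polynomial.monom 1 N2 * r1 + Polynomial.monom 1 N1 * r2) t"
      by (simp add: poly_monom)
    finally show "t ^ (N1 + N2) * (p (Lf \<alpha> \<beta> t) + q (Lf \<alpha> \<beta> t)) = poly (Polynomial.monom 1 N2 * r1 + Polynomial.monom 1 N1 * r2) t" .
  qed
next
  case (mult p q)
  obtain N1 r1 where 1: "\<forall>t. t \<noteq> 0 \<longrightarrow> t ^ N1 * p (Lf \<alpha> \<beta> t) = poly r1 t"
    using mult.IH(1) by (elim exE)
  obtain N2 r2 where 2: "\<forall>t. t \<noteq> 0 \<longrightarrow> t ^ N2 * q (Lf \<alpha> \<beta> t) = poly r2 t"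
    using mult.IH(2) by (elim exE)
  show ?case
  proof (rule exI[of _ "N1 + N2"], rule exI[of _ "r1 * r2"], intro allI impI)
    fix t :: 'a assume t: "t \<noteq> 0"
    have "t ^ (N1 + N2) * (p (Lf \<alpha> \<beta> t) * q (Lf \<alpha> \<beta> t)) =
      (t ^ N1 * p (Lf \<alpha> \<beta> t)) * (t ^ N2 * q (Lf \<alpha> \<beta> t))"
      by (simp add: power_add algebra_simps)
    also have "\<dots> = poly r1 t * poly r2 t"
      by (simp only: 1[rule_format, OF t] 2[rule_format, OF t])
    also have "\<dots> = poly (r1 * r2) t"
      by simp
    finally show "t ^ (N1 + N2) * (p (Lf \<alpha> \<beta> t) * q (Lf \<alpha> \<beta> t)) = poly (r1 * r2) t" .
  qed
qed

lemma laurent_vanish: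
  fixes p :: "('a::field)^2^2 \<Rightarrow> 'a"
  assumes "p \<in> poly_fun" "infinite Z" "\<forall>z\<in>Z. z \<noteq> 0 \<and> p (Lf \<alpha> \<beta> z) = 0" "t \<noteq> 0"
  shows "p (Lf \<alpha> \<beta> t) = 0"
proof -
  obtain N r where r: "\<forall>t. t \<noteq> 0 \<longrightarrow> t ^ N * p (Lf \<alpha> \<beta> t) = poly r t"
    using laurent[OF assms(1)] by blast
  have "Z \<subseteq> {x. poly r x = 0}"
  proof
    fix z assume "z \<in> Z"
    with assms(3) have "z \<noteq> 0" "p (Lf \<alpha> \<beta> z) = 0" by auto
    with r have "z ^ N * p (Lf \<alpha> \<beta> z) = poly r z" by blast
    with \<open>p (Lf \<alpha> \<beta> z) = 0\<close> have "poly r z = 0" by simp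
    then show "z \<in> {x. poly r x = 0}" by simp
  qed
  then have "infinite {x. poly r x = 0}" using assms(2) finite_subset by blast
  then have "r = 0" using poly_roots_finite by blast
  then have "t ^ N * p (Lf \<alpha> \<beta> t) = 0" using r assms(4) by simp
  then show ?thesis using assms(4) by simp
qed

section \<open>Tori\<close>

definition Tor :: "'a \<Rightarrow> 'a \<Rightarrow> 'a \<Rightarrow> 'a \<Rightarrow> 'a \<Rightarrow> ('a::field)^2^2" where
  "Tor e f g h t = mk (e*t + (1-e)/t) (f*t - f/t) (g*t - g/t) (h*t + (1-h)/t)"

lemma Tor_Lf: "Tor e f g h t = Lf (\<lambda>i j. mk e f g h $ i $ j) (\<lambda>i j. mk (1-e) (-f) (-g) (1-h) $ i $ j) t"
  unfolding Tor_def Lf_def by (simp add: vec_eq_iff forall_2 diff_divide_distrib)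



lemma Tor_one: "Tor e f g h 1 = mat 1"
  by (simp add: Tor_def mat_mk)


lemma Tor_ids:
  fixes e f g s t :: "'a::field"
  assumes fg0: "f * g = e * (1 - e)" and st: "s \<noteq> 0" "t \<noteq> 0"
  shows "(e * s + (1 - e) / s) * (e * t + (1 - e) / t) + (f * s - f / s) * (g * t - g / t) = e * (s * t) + (1 - e) / (s * t)"
    "(e * s + (1 - e) / s) * (f * t - f / t) +
        (f * s - f / s) * ((1 - e) * t + (1 - (1 - e)) / t) =
        f * (s * t) - f / (s * t)"
    "(g * s - g / s) * (e * t + (1 - e) / t) +
        ((1 - e) * s + (1 - (1 - e)) / s) * (g * t - g / t) =
        g * (s * t) - g / (s * t)"
    "(g * s - g / s) * (f * t - f / t) +
        ((1 - e) * s + (1 - (1 - e)) / s) *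
        ((1 - e) * t + (1 - (1 - e)) / t) =
        (1 - e) * (s * t) +
        (1 - (1 - e)) /
        (s * t)"
proof -
  have fg: "\<And>x. f * (g * x) = (e - e*e) * x" "\<And>x. g * (f * x) = (e - e*e) * x"
    using fg0 by (metis mult.assoc mult.commute right_diff_distrib mult_1_right)+
  show "(e * s + (1 - e) / s) * (e * t + (1 - e) / t) + (f * s - f / s) * (g * t - g / t) = e * (s * t) + (1 - e) / (s * t)"
    using st by (simp add: field_simps) (simp add: fg algebra_simps)
  show "(e * s + (1 - e) / s) * (f * t - f / t) +
        (f * s - f / s) * ((1 - e) * t + (1 - (1 - e)) / t) =
        f * (s * t) - f / (s * t)"
    using st by (simp add: field_simps)
  show "(g * s - g / s) * (e * t + (1 - e) / t) +
        ((1 - e) * s + (1 - (1 - e)) / s) * (g * t - g / t) =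
        g * (s * t) - g / (s * t)"
    using st by (simp add: field_simps)
  show "(g * s - g / s) * (f * t - f / t) +
        ((1 - e) * s + (1 - (1 - e)) / s) *
        ((1 - e) * t + (1 - (1 - e)) / t) =
        (1 - e) * (s * t) + (1 - (1 - e)) / (s * t)"
    using st by (simp add: field_simps) (simp add: fg algebra_simps)
qed

lemma Tor_mult:
  assumes "e + h = 1" "e * h = f * g" "s \<noteq> 0" "t \<noteq> 0"
  shows "Tor e f g h s ** Tor e f g h t = Tor e f g h (s * t)"
proof -
  have h: "h = 1 - e" using add_diff_cancel_left'[of e h] assms(1) by simp
  have fg: "f * g = e * (1 - e)" using assms(2) h by simp
  show ?thesis unfolding Tor_def mk_mult mk_eq_iff h using Tor_ids[OF fg assms(3,4)] by blast
qed

definition Dg :: "'a \<Rightarrow> ('a::field)^2^2" where "Dg t = mk t 0 0 (1/t)"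

lemma Tor_diag:
  assumes "e + h = 1" "e * h = f * g"
  shows "\<exists>P Q. P ** Q = mat 1 \<and> Q ** P = mat 1 \<and> (\<forall>t. t \<noteq> 0 \<longrightarrow> Tor e f g h t = P ** Dg t ** Q)"
proof (cases "e = 0")
  case True
  then have h: "h = 1" and fg: "f * g = 0" using assms by auto
  show ?thesis
    apply (rule exI[of _ "mk f 1 1 (-g)"], rule exI[of _ "mk g 1 1 (-f)"])
    apply (simp add: Tor_def Dg_def mat_mk h True fg mult.commute[of g f] field_simps)
    done
next
  case False
  have h: "h = 1 - e" using add_diff_cancel_left'[of e h] assms(1) by simp
  have fg: "f * g = e * (1 - e)" using assms(2) h by simp
  show ?thesis
    apply (rule exI[of _ "mk e (-f) g e"], rule exI[of _ "mk 1 (f/e) (-g/e) 1"])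
    using False apply (simp add: Tor_def Dg_def mat_mk h field_simps)
    apply (simp add: fg algebra_simps)
    done
qed


section \<open>The invariant\<close>

definition Phi :: "('a::comm_ring_1)^2^2 \<Rightarrow> 'a^2^2 \<Rightarrow> 'a" where
  "Phi a b = trace (mpow a 2 ** mpow b 2 ** mpow a 2 ** mpow b 2) - trace (mpow a 4 ** mpow b 4)"

lemma Phi_upper: "Phi (mk a b 0 d) (mk a' b' 0 d') = 0"
  by (simp add: Phi_def mpow_2 mpow_4 algebra_simps)

lemma Phi_lower: "Phi (mk a 0 c d) (mk a' 0 c' d') = 0"
  by (simp add: Phi_def mpow_2 mpow_4 algebra_simps)

definition inN :: "('a::comm_ring_1)^2^2 \<Rightarrow> bool" where
  "inN A \<longleftrightarrow> (A$1$2 = 0 \<and> A$2$1 = 0) \<or> (A$1$1 = 0 \<and> A$2$2 = 0)"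

lemma inN_sq: "inN A \<Longrightarrow> \<exists>u v. A ** A = mk u 0 0 v"
  unfolding inN_def using mk_cases[of A] by auto

lemma Phi_diag: "Phi A B = trace (mpow (A**A) 2 ** mpow (B**B) 2) * 0 + 
   (trace ((A**A) ** (B**B) ** (A**A) ** (B**B)) - trace (mpow (A**A) 2 ** mpow (B**B) 2))"
  by (simp add: Phi_def mpow_2 mpow_4 matrix_mul_assoc)

lemma Phi_N: assumes "inN A" "inN B" shows "Phi A B = 0"
proof -
  obtain u v where 1: "A ** A = mk u 0 0 v" using inN_sq[OF assms(1)] by blast
  obtain u' v' where 2: "B ** B = mk u' 0 0 v'" using inN_sq[OF assms(2)] by blast
  show ?thesis unfolding Phi_diag 1 2 by (simp add: mpow_2 algebra_simps)
qed

lemma Phi_conj: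
  assumes PQ: "P ** Q = mat 1"
  shows "Phi (Q ** A ** P) (Q ** B ** P) = Phi A B"
proof -
  have PQ': "P ** (Q ** R) = R" for R
    by (simp add: matrix_mul_assoc PQ)
  have c: "(Q ** W ** P) ** (Q ** Y ** P) = Q ** (W ** Y) ** P" for W Y
    by (simp add: matrix_mul_assoc[symmetric] PQ')
  have mp: "mpow (Q ** W ** P) (Suc n) = Q ** mpow W (Suc n) ** P" for W n
  proof (induction n)
    case 0 then show ?case by simp
  next
    case (Suc n)
    have "mpow (Q ** W ** P) (Suc (Suc n)) = (Q ** W ** P) ** (Q ** mpow W (Suc n) ** P)"
      using Suc by simp
    also have "\<dots> = Q ** mpow W (Suc (Suc n)) ** P" by (simp only: c) simp
    finally show ?case .
  qed
  have tr: "trace (Q ** V ** P) = trace V" for V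
    using trace_mul_sym[of "Q ** V" P] by (simp add: PQ')
  have two: "(2::nat) = Suc 1" and four: "(4::nat) = Suc 3" by simp_all
  show ?thesis unfolding Phi_def two four mp c tr ..
qed


section \<open>Groups containing the diagonal torus\<close>

definition grp :: "(('a::field)^2^2) set \<Rightarrow> bool" where
  "grp H \<longleftrightarrow> (\<forall>A\<in>H. det A = 1) \<and> mat 1 \<in> H \<and> (\<forall>A\<in>H. \<forall>B\<in>H. A ** B \<in> H) \<and>
     (\<forall>A\<in>H. adj2 A \<in> H) \<and> (\<forall>t. t \<noteq> 0 \<longrightarrow> Dg t \<in> H)"

definition Uu :: "'a \<Rightarrow> ('a::field)^2^2" where "Uu u = mk 1 u 0 1"
definition Ll :: "'a \<Rightarrow> ('a::field)^2^2" where "Ll u = mk 1 0 u 1"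

lemma grpD:
  assumes "grp H"
  shows "A \<in> H \<Longrightarrow> det A = 1" "mat 1 \<in> H" "A \<in> H \<Longrightarrow> B \<in> H \<Longrightarrow> A ** B \<in> H"
    "A \<in> H \<Longrightarrow> adj2 A \<in> H" "t \<noteq> 0 \<Longrightarrow> Dg t \<in> H"
  using assms unfolding grp_def by auto

lemma big_cell:
  assumes H: "grp H" and U: "\<forall>u. Uu u \<in> H" and L: "\<forall>u. Ll u \<in> H" and A: "det A = 1"
  shows "A \<in> H"
proof -
  have cell: "B \<in> H" if "det B = 1" "B $ 1 $ 1 \<noteq> 0" for B :: "'a^2^2"
  proof -
    obtain a b c d where B: "B = mk a b c d" using mk_cases by blast
    with that have a: "a \<noteq> 0" and det: "a * d - b * c = 1" by auto
    have "Ll (c/a) ** Dg a ** Uu (b/a) = B"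
      unfolding B Ll_def Dg_def Uu_def using a det by (simp add: field_simps)
    moreover have "Ll (c/a) ** Dg a ** Uu (b/a) \<in> H"
      using U L grpD(3,5)[OF H] a by blast
    ultimately show ?thesis by simp
  qed
  obtain a b c d where Ad: "A = mk a b c d" using mk_cases by blast
  show ?thesis
  proof (cases "a = 0")
    case False then show ?thesis using cell A Ad by simp
  next
    case True
    then have b: "b \<noteq> 0" using A Ad by auto
    have "A ** Ll 1 \<in> H"
      by (rule cell) (use A Ad b True in \<open>simp_all add: Ll_def det_mul algebra_simps\<close>)
    then have "A ** Ll 1 ** Ll (-1) \<in> H" using L grpD(3)[OF H] by blast
    moreover have "A ** Ll 1 ** Ll (-1) = A" by (simp add: Ad Ll_def)
    ultimately show ?thesis by simp
  qed
qed

lemma sqrt_ex: "\<exists>y. y * y = (x::'a::alg_closed_field)"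
  using nth_root_exists[of 2 x] by (auto simp: power2_eq_square)

lemma U_from_upper:
  fixes H :: "(('a::alg_closed_field)^2^2) set"
  assumes H: "grp H" and h: "mk p q 0 s \<in> H" and q: "q \<noteq> 0"
  shows "Uu u \<in> H"
proof (cases "u = 0")
  case True then show ?thesis using grpD(2)[OF H] by (simp add: Uu_def mat_mk)
next
  case False
  have ps: "p * s = 1" using grpD(1)[OF H h] by simp
  then have p: "p \<noteq> 0" by auto
  obtain \<tau> where tau: "\<tau> * \<tau> = u * p / q" using sqrt_ex by blast
  then have t0: "\<tau> \<noteq> 0" using False p q by auto
  have "Dg (1/p) ** (Dg \<tau> ** mk p q 0 s ** Dg (1/\<tau>)) \<in> H"
    using grpD(3,5)[OF H] h t0 p by simp
  moreover have "Dg (1/p) ** (Dg \<tau> ** mk p q 0 s ** Dg (1/\<tau>)) = Uu u"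
    unfolding Dg_def Uu_def using p q t0 ps tau by (simp add: field_simps)
  ultimately show ?thesis by simp
qed

lemma L_from_lower:
  fixes H :: "(('a::alg_closed_field)^2^2) set"
  assumes H: "grp H" and h: "mk p 0 r s \<in> H" and r: "r \<noteq> 0"
  shows "Ll u \<in> H"
proof (cases "u = 0")
  case True then show ?thesis using grpD(2)[OF H] by (simp add: Ll_def mat_mk)
next
  case False
  have ps: "p * s = 1" using grpD(1)[OF H h] by simp
  then have p: "p \<noteq> 0" by auto
  obtain \<tau> where tau: "\<tau> * \<tau> = p * r / u" using sqrt_ex by blast
  then have t0: "\<tau> \<noteq> 0" using False p r by auto
  have "Dg (1/p) ** (Dg \<tau> ** mk p 0 r s ** Dg (1/\<tau>)) \<in> H"
    using grpD(3,5)[OF H] h t0 p by simp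
  moreover have "Dg (1/p) ** (Dg \<tau> ** mk p 0 r s ** Dg (1/\<tau>)) = Ll u"
    unfolding Dg_def Ll_def using p r t0 ps tau False by (simp add: field_simps)
  ultimately show ?thesis by simp
qed

lemma L_from_U:
  assumes H: "grp H" and U: "\<forall>u. Uu u \<in> H" and h: "mk p q r s \<in> H" and r: "r \<noteq> 0"
  shows "Ll u \<in> H"
proof -
  have det: "p * s - q * r = 1" using grpD(1)[OF H h] by simp
  have w: "Uu (-p/r) ** mk p q r s ** Uu (-s/r) = mk 0 (-1/r) r 0"
    unfolding Uu_def using r det by (simp add: field_simps)
  have "Uu (-p/r) ** mk p q r s ** Uu (-s/r) \<in> H" using U h grpD(3)[OF H] by blast
  then have wH: "mk 0 (-1/r) r 0 \<in> H" using w by simp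
  have "mk 0 (-1/r) r 0 ** Uu (-u/(r*r)) ** adj2 (mk 0 (-1/r) r 0) \<in> H"
    using wH U grpD(3,4)[OF H] by blast
  moreover have "mk 0 (-1/r) r 0 ** Uu (-u/(r*r)) ** adj2 (mk 0 (-1/r) r 0) = Ll u"
    unfolding Uu_def Ll_def using r by (simp add: field_simps)
  ultimately show ?thesis by simp
qed

lemma U_from_L:
  assumes H: "grp H" and L: "\<forall>u. Ll u \<in> H" and h: "mk p q r s \<in> H" and q: "q \<noteq> 0"
  shows "Uu u \<in> H"
proof -
  have det: "p * s - q * r = 1" using grpD(1)[OF H h] by simp
  have w: "Ll (-s/q) ** mk p q r s ** Ll (-p/q) = mk 0 q (-1/q) 0"
    unfolding Ll_def using q det by (simp add: field_simps)
  have "Ll (-s/q) ** mk p q r s ** Ll (-p/q) \<in> H" using L h grpD(3)[OF H] by blast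
  then have wH: "mk 0 q (-1/q) 0 \<in> H" using w by simp
  have "mk 0 q (-1/q) 0 ** Ll (-u/(q*q)) ** adj2 (mk 0 q (-1/q) 0) \<in> H"
    using wH L grpD(3,4)[OF H] by blast
  moreover have "mk 0 q (-1/q) 0 ** Ll (-u/(q*q)) ** adj2 (mk 0 q (-1/q) 0) = Uu u"
    unfolding Uu_def Ll_def using q by (simp add: field_simps)
  ultimately show ?thesis by simp
qed


lemma pick_t: "infinite (UNIV::'a set) \<Longrightarrow> \<exists>t::'a::field. t \<noteq> 0 \<and> t * t \<noteq> 1"
proof -
  assume inf: "infinite (UNIV::'a set)"
  obtain t :: 'a where "t \<notin> {0, 1, -1}" using ex_new_if_finite[OF inf, of "{0,1,-1}"] by auto
  then show ?thesis using square_eq_1_iff[of t] by auto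
qed

lemma case_p0:
  assumes H: "grp H" and inf: "infinite (UNIV::'a set)" and h: "mk 0 q r s \<in> H" and s: "s \<noteq> (0::'a::field)"
  shows "\<exists>p' r' s'. mk p' 0 r' s' \<in> H \<and> r' \<noteq> 0"
proof -
  obtain t :: 'a where t: "t \<noteq> 0" "t * t \<noteq> 1" using pick_t[OF inf] by blast
  have det: "- (q * r) = 1" using grpD(1)[OF H h] by simp
  then have r: "r \<noteq> 0" by auto
  define M where "M = mk 0 q r s ** Dg t ** adj2 (mk 0 q r s)"
  have MH: "M \<in> H" unfolding M_def using grpD(3,4,5)[OF H] h t by blast
  have M12: "M $ 1 $ 2 = 0" unfolding M_def Dg_def by simp
  have M21: "M $ 2 $ 1 = r * s * (t - 1/t)" unfolding M_def Dg_def by (simp add: algebra_simps)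
  have "t - 1/t \<noteq> 0" using t by (simp add: field_simps)
  then have "M $ 2 $ 1 \<noteq> 0" using M21 r s by simp
  moreover have "M = mk (M$1$1) 0 (M$2$1) (M$2$2)" using mk_eta[of M] M12 by simp
  ultimately show ?thesis using MH by metis
qed

lemma case_s0:
  assumes H: "grp H" and inf: "infinite (UNIV::'a set)" and h: "mk p q r 0 \<in> H" and p: "p \<noteq> (0::'a::field)"
  shows "\<exists>p' q' s'. mk p' q' 0 s' \<in> H \<and> q' \<noteq> 0"
proof -
  obtain t :: 'a where t: "t \<noteq> 0" "t * t \<noteq> 1" using pick_t[OF inf] by blast
  have det: "- (q * r) = 1" using grpD(1)[OF H h] by simp
  then have q: "q \<noteq> 0" by auto
  define M where "M = mk p q r 0 ** Dg t ** adj2 (mk p q r 0)"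
  have MH: "M \<in> H" unfolding M_def using grpD(3,4,5)[OF H] h t by blast
  have M21: "M $ 2 $ 1 = 0" unfolding M_def Dg_def by simp
  have M12: "M $ 1 $ 2 = p * q * (1/t - t)" unfolding M_def Dg_def by (simp add: algebra_simps)
  have "1/t - t \<noteq> 0" using t by (simp add: field_simps)
  then have "M $ 1 $ 2 \<noteq> 0" using M12 q p by simp
  moreover have "M = mk (M$1$1) (M$1$2) 0 (M$2$2)" using mk_eta[of M] M21 by simp
  ultimately show ?thesis using MH by metis
qed

lemma case_good:
  fixes H :: "(('a::alg_closed_field)^2^2) set"
  assumes H: "grp H" and h: "mk p q r s \<in> H" and nz: "p \<noteq> 0" "q \<noteq> 0" "r \<noteq> 0" "s \<noteq> 0"
    and good: "p * p * (s * s) \<noteq> q * q * (r * r)"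
  shows "\<exists>q' r' s'. mk 0 q' r' s' \<in> H \<and> s' \<noteq> 0"
proof -
  obtain \<tau> :: 'a where tau: "\<tau> * \<tau> = - (q * r) / (p * p)" using sqrt_ex by blast
  then have t0: "\<tau> \<noteq> 0" using nz by auto
  define M where "M = mk p q r s ** Dg \<tau> ** mk p q r s"
  have MH: "M \<in> H" unfolding M_def using grpD(3,5)[OF H] h t0 by blast
  have M11: "M $ 1 $ 1 = (p * p * (\<tau> * \<tau>) + q * r) / \<tau>" unfolding M_def Dg_def
    using t0 by (simp add: field_simps)
  have M22: "M $ 2 $ 2 = (q * r * (\<tau> * \<tau>) + s * s) / \<tau>" unfolding M_def Dg_def
    using t0 by (simp add: field_simps)
  have "M $ 1 $ 1 = 0" unfolding M11 tau using nz by (simp add: field_simps)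
  moreover have "M $ 2 $ 2 \<noteq> 0"
  proof
    assume "M $ 2 $ 2 = 0"
    then have "q * r * (\<tau> * \<tau>) + s * s = 0" unfolding M22 using t0 by simp
    then have "q * r * (- (q * r)) + s * s * (p * p) = 0" unfolding tau using nz
      by (simp add: field_simps)
    then show False using good by (simp add: algebra_simps)
  qed
  moreover have "M = mk (M$1$1) (M$1$2) (M$2$1) (M$2$2)" using mk_eta[of M] by simp
  ultimately show ?thesis using MH by metis
qed


lemma exists_nonroot:
  assumes "infinite (UNIV::'a::field set)" "f \<noteq> 0"
  shows "\<exists>t::'a. poly f t \<noteq> 0"
proof -
  have "finite {t. poly f t = 0}" using poly_roots_finite[OF assms(2)] .
  then obtain t where "t \<notin> {t. poly f t = 0}" using ex_new_if_finite[OF assms(1)] by blast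
  then show ?thesis by auto
qed

lemma sq_lemma:
  fixes x y z w :: "'a::field"
  assumes d: "x * w - y * z = 1" and e: "x * x * (w * w) = y * y * (z * z)"
  shows "2 * (x * w) = 1"
proof -
  have "(x * w - y * z) * (x * w + y * z) = x * x * (w * w) - y * y * (z * z)" by (simp add: algebra_simps)
  also have "\<dots> = 0" using e by simp
  finally have "x * w + y * z = 0" using d by simp
  then have "y * z = - (x * w)" by (simp add: eq_neg_iff_add_eq_0 add.commute)
  then show ?thesis using d by (simp add: mult.commute)
qed

lemma key_lemma:
  fixes p q r s t :: "'a::field"
  assumes t: "t \<noteq> 0" and qr: "q * r = - (p * s)" and ps2: "2 * (p * s) = 1"
    and a: "2 * (((q * r + t * (t * (p * p))) / t) * ((s * s + t * (t * (q * r))) / t)) = 1"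
  shows "s * s + t * (t * (1 - 2 * (p * s) + t * (t * (p * p)))) = 0"
proof -
  have "2 * ((q * r + t * (t * (p * p))) * (s * s + t * (t * (q * r)))) = t * t"
    using a t by (simp add: field_simps)
  then have "2 * ((t * t * (p * p) - p * s) * (s * s - t * t * (p * s))) = t * t"
    unfolding qr by (simp add: algebra_simps)
  then have "2 * (p * s) * (- ((t * t * p - s) * (t * t * p - s))) = t * t"
    by (simp add: algebra_simps)
  then have "- ((t * t * p - s) * (t * t * p - s)) = t * t" unfolding ps2 by simp
  then have "(t * t * p - s) * (t * t * p - s) + t * t = 0" by (simp add: add_eq_0_iff)
  then show ?thesis by (simp add: algebra_simps)
qed

lemma case_bad:
  fixes H :: "(('a::field)^2^2) set"
  assumes H: "grp H" and inf: "infinite (UNIV::'a set)" and h: "mk p q r s \<in> H"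
    and nz: "p \<noteq> 0" "q \<noteq> 0" "r \<noteq> 0" "s \<noteq> 0"
    and bad: "p * p * (s * s) = q * q * (r * r)"
  shows "\<exists>p' q' r' s'. mk p' q' r' s' \<in> H \<and> p' \<noteq> 0 \<and> q' \<noteq> 0 \<and> r' \<noteq> 0 \<and> s' \<noteq> 0 \<and>
           p' * p' * (s' * s') \<noteq> q' * q' * (r' * r')"
proof -
  have det: "p * s - q * r = 1" using grpD(1)[OF H h] by simp
  have "(p * s - q * r) * (p * s + q * r) = 0" using bad by (simp add: algebra_simps)
  then have qr: "q * r = - (p * s)" using det by (simp add: add_eq_0_iff)
  then have ps2: "2 * (p * s) = 1" using det by simp
  define f where "f = [:0,1:] * [:s,0,p:] * [:q * r,0,p * p:] * [:s * s,0,q * r:] * [:s * s,0,1 - 2 * (p * s),0,p * p:]"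
  have "f \<noteq> 0" unfolding f_def using nz by simp
  then obtain t where "poly f t \<noteq> 0" using exists_nonroot[OF inf] by blast
  then have t: "t \<noteq> 0" and f1: "s + t * (t * p) \<noteq> 0" and f2: "q * r + t * (t * (p * p)) \<noteq> 0"
    and f3: "s * s + t * (t * (q * r)) \<noteq> 0"
    and f4: "s * s + t * (t * (1 - 2 * (p * s) + t * (t * (p * p)))) \<noteq> 0"
    unfolding f_def poly_mult by simp_all
  define M where "M = mk p q r s ** Dg t ** mk p q r s"
  have MH: "M \<in> H" unfolding M_def using grpD(3,5)[OF H] h t by blast
  have M11: "M $ 1 $ 1 = (q * r + t * (t * (p * p))) / t" unfolding M_def Dg_def
    using t by (simp add: field_simps)
  have M12: "M $ 1 $ 2 = q * (s + t * (t * p)) / t" unfolding M_def Dg_def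
    using t by (simp add: field_simps)
  have M21: "M $ 2 $ 1 = r * (s + t * (t * p)) / t" unfolding M_def Dg_def
    using t by (simp add: field_simps)
  have M22: "M $ 2 $ 2 = (s * s + t * (t * (q * r))) / t" unfolding M_def Dg_def
    using t by (simp add: field_simps)
  define a11 where "a11 = M $ 1 $ 1"
  define a12 where "a12 = M $ 1 $ 2"
  define a21 where "a21 = M $ 2 $ 1"
  define a22 where "a22 = M $ 2 $ 2"
  have Meq: "M = mk a11 a12 a21 a22" unfolding a11_def a12_def a21_def a22_def by (rule mk_eta)
  have detM: "a11 * a22 - a12 * a21 = 1"
    using grpD(1)[OF H MH] unfolding Meq by simp
  have nz': "a11 \<noteq> 0" "a12 \<noteq> 0" "a21 \<noteq> 0" "a22 \<noteq> 0"
    unfolding a11_def a12_def a21_def a22_def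
    using M11 M12 M21 M22 t f1 f2 f3 nz by simp_all
  have key: "2 * (a11 * a22) \<noteq> 1"
  proof
    assume a: "2 * (a11 * a22) = 1"
    have "s * s + t * (t * (1 - 2 * (p * s) + t * (t * (p * p)))) = 0"
      by (rule key_lemma[OF t qr ps2]) (use a in \<open>simp only: a11_def a22_def M11 M22\<close>)
    then show False using f4 by simp
  qed
  have "a11 * a11 * (a22 * a22) \<noteq> a12 * a12 * (a21 * a21)"
    using sq_lemma[OF detM] key by blast
  moreover have "mk a11 a12 a21 a22 \<in> H" using MH Meq by simp
  ultimately show ?thesis using nz' by blast
qed


lemma tri:
  fixes H :: "(('a::alg_closed_field)^2^2) set"
  assumes H: "grp H" and inf: "infinite (UNIV::'a set)" and hH0: "mk p q r s \<in> H"
    and nN: "\<not> ((q = 0 \<and> r = 0) \<or> (p = 0 \<and> s = 0))"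
  shows "(\<exists>p q s. mk p q 0 s \<in> H \<and> q \<noteq> 0) \<or> (\<exists>p r s. mk p 0 r s \<in> H \<and> r \<noteq> 0)"
proof -
  have fromp0: "(\<exists>p q s. mk p q 0 s \<in> H \<and> q \<noteq> 0) \<or> (\<exists>p r s. mk p 0 r s \<in> H \<and> r \<noteq> 0)"
    if "mk 0 q' r' s' \<in> H" "s' \<noteq> 0" for q' r' s'
    using case_p0[OF H inf that] by blast
  show ?thesis
  proof (cases "r = 0")
    case True
    then have "q \<noteq> 0" using nN by auto
    moreover have "mk p q 0 s \<in> H" using hH0 True by simp
    ultimately show ?thesis by blast
  next
    case False note r = this
    show ?thesis
    proof (cases "q = 0")
      case True
      then have "mk p 0 r s \<in> H" using hH0 by simp
      then show ?thesis using r by blast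
    next
      case False note q = this
      show ?thesis
      proof (cases "p = 0")
        case True
        then have "s \<noteq> 0" using nN by auto
        moreover have "mk 0 q r s \<in> H" using hH0 True by simp
        ultimately show ?thesis by (rule fromp0[rotated])
      next
        case False note p = this
        show ?thesis
        proof (cases "s = 0")
          case True
          then have "mk p q r 0 \<in> H" using hH0 by simp
          from case_s0[OF H inf this p] have "\<exists>p q s. mk p q 0 s \<in> H \<and> q \<noteq> 0" .
          then show ?thesis by (rule disjI1)
        next
          case False note s = this
          show ?thesis
          proof (cases "p * p * (s * s) = q * q * (r * r)")
            case True
            obtain p' q' r' s' where hb: "mk p' q' r' s' \<in> H" "p' \<noteq> 0" "q' \<noteq> 0" "r' \<noteq> 0" "s' \<noteq> 0"
              "p' * p' * (s' * s') \<noteq> q' * q' * (r' * r')"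
              using case_bad[OF H inf hH0 p q r s True] by (elim exE conjE)
            obtain q'' r'' s'' where "mk 0 q'' r'' s'' \<in> H" "s'' \<noteq> 0"
              using case_good[OF H hb] by (elim exE conjE)
            then show ?thesis using fromp0 by blast
          next
            case False
            obtain q'' r'' s'' where "mk 0 q'' r'' s'' \<in> H" "s'' \<noteq> 0"
              using case_good[OF H hH0 p q r s False] by (elim exE conjE)
            then show ?thesis using fromp0 by blast
          qed
        qed
      qed
    qed
  qed
qed

lemma main:
  fixes H :: "(('a::alg_closed_field)^2^2) set"
  assumes H: "grp H" and inf: "infinite (UNIV::'a set)" and x: "x \<in> H" and y: "y \<in> H"
    and Ph: "Phi x y \<noteq> 0" and A: "det A = 1"
  shows "A \<in> H"
proof -
  obtain a b c d where xe: "x = mk a b c d" using mk_cases by blast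
  obtain a' b' c' d' where ye: "y = mk a' b' c' d'" using mk_cases by blast
  have notN: "\<exists>p q r s. mk p q r s \<in> H \<and> \<not> ((q = 0 \<and> r = 0) \<or> (p = 0 \<and> s = 0))"
  proof (rule ccontr)
    assume "\<not> ?thesis"
    then have "inN x" "inN y" using x y unfolding xe ye inN_def by auto
    then show False using Phi_N Ph by blast
  qed
  then obtain p q r s where hH: "mk p q r s \<in> H" and nN: "\<not> ((q = 0 \<and> r = 0) \<or> (p = 0 \<and> s = 0))"
    by blast
  have low: "\<exists>p q r s. mk p q r s \<in> H \<and> r \<noteq> 0"
  proof (rule ccontr)
    assume "\<not> ?thesis"
    then have "c = 0" "c' = 0" using x y unfolding xe ye by auto
    then show False using Ph unfolding xe ye by (simp add: Phi_upper)
  qed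
  have upp: "\<exists>p q r s. mk p q r s \<in> H \<and> q \<noteq> 0"
  proof (rule ccontr)
    assume "\<not> ?thesis"
    then have "b = 0" "b' = 0" using x y unfolding xe ye by auto
    then show False using Ph unfolding xe ye by (simp add: Phi_lower)
  qed
  from tri[OF H inf hH nN] show ?thesis
  proof
    assume "\<exists>p q s. mk p q 0 s \<in> H \<and> q \<noteq> 0"
    then obtain p1 q1 s1 where "mk p1 q1 0 s1 \<in> H" "q1 \<noteq> 0" by blast
    then have U: "\<forall>u. Uu u \<in> H" using U_from_upper[OF H] by blast
    obtain p2 q2 r2 s2 where "mk p2 q2 r2 s2 \<in> H" "r2 \<noteq> 0" using low by blast
    then have L: "\<forall>u. Ll u \<in> H" using L_from_U[OF H U] by blast
    show ?thesis by (rule big_cell[OF H U L A])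
  next
    assume "\<exists>p r s. mk p 0 r s \<in> H \<and> r \<noteq> 0"
    then obtain p1 r1 s1 where "mk p1 0 r1 s1 \<in> H" "r1 \<noteq> 0" by blast
    then have L: "\<forall>u. Ll u \<in> H" using L_from_lower[OF H] by blast
    obtain p2 q2 r2 s2 where "mk p2 q2 r2 s2 \<in> H" "q2 \<noteq> 0" using upp by blast
    then have U: "\<forall>u. Uu u \<in> H" using U_from_L[OF H L] by blast
    show ?thesis by (rule big_cell[OF H U L A])
  qed
qed


lemma adj2_right: "det A = 1 \<Longrightarrow> A ** adj2 A = mat 1"
  using mk_cases[of A] by (auto simp: mat_mk algebra_simps)

lemma adj2_left: "det A = 1 \<Longrightarrow> adj2 A ** A = mat 1"
  using mk_cases[of A] by (auto simp: mat_mk algebra_simps)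

lemma inv_adj2:
  assumes "det A = 1" "A ** B = mat 1"
  shows "B = adj2 A"
proof -
  have "B = (adj2 A ** A) ** B" using adj2_left[OF assms(1)] by simp
  also have "\<dots> = adj2 A ** (A ** B)" by (simp add: matrix_mul_assoc)
  also have "\<dots> = adj2 A" using assms(2) by simp
  finally show ?thesis .
qed

lemma ac_Phi: "Phi (ac_mat a) (ac_mat b) = to_ac (Phi a b)"
  unfolding Phi_def by (simp add: ac_mpow ac_mult ac_trace[symmetric])

lemma pm_Phi_right: "(\<lambda>B. Phi C B) \<in> poly_fun"
  unfolding Phi_def
  by (intro poly_sub poly_trace pm_mult pm_mpow pm_const pm_id)

lemma pm_Phi_left: "(\<lambda>A. Phi A C) \<in> poly_fun"
  unfolding Phi_def
  by (intro poly_sub poly_trace pm_mult pm_mpow pm_const pm_id)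

lemma Phi_example:
  assumes "(x::'a::field) \<noteq> 0"
  shows "Phi (Dg x) (mk 1 1 (-1) 0) = (x * x - 1 / (x * x))^2"
  using assms unfolding Phi_def Dg_def by (simp add: mpow_2 mpow_4 field_simps power2_eq_square)


lemma pow_inj:
  fixes l :: "'a::field"
  assumes l0: "l \<noteq> 0" and nr: "\<forall>n>0. l ^ n \<noteq> 1"
  shows "inj (\<lambda>n::nat. l ^ n)"
proof (rule injI)
  have aux: "m = n" if "l ^ m = l ^ n" "m \<le> n" for m n :: nat
  proof (rule ccontr)
    assume "m \<noteq> n"
    with that(2) have mn: "m < n" by simp
    have "l ^ n = l ^ m * l ^ (n - m)" using mn by (simp add: power_add[symmetric])
    then have "l ^ m * l ^ (n - m) = l ^ m * 1" using that(1) by simp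
    then have "l ^ (n - m) = 1" using l0 by simp
    then show False using nr mn by simp
  qed
  fix m n :: nat assume "l ^ m = l ^ n"
  then show "m = n" using aux[of m n] aux[of n m] by (cases "m \<le> n") auto
qed

lemma subgroup_mpow: "subgroup_SL2 G \<Longrightarrow> g \<in> G \<Longrightarrow> mpow g n \<in> G"
  by (induction n) (auto simp: subgroup_SL2_def)

lemma subgroup_det: "subgroup_SL2 G \<Longrightarrow> g \<in> G \<Longrightarrow> det g = 1"
  by (auto simp: subgroup_SL2_def SL2_def)

lemma tl_gen:
  fixes a l m E :: "'a::field"
  assumes l0: "l \<noteq> 0" and lm: "l * m = 1" and E: "E * (l - m) = a - m"
  shows "E * l + (1 - E) / l = a"
proof -
  have "(E * l + (1 - E) / l) * l = E * l * l + (1 - E)" using l0 by (simp add: field_simps)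
  also have "\<dots> = E * (l - m) * l + E * (l * m - 1) + 1" by (simp add: algebra_simps)
  also have "\<dots> = (a - m) * l + 1" using E lm by simp
  also have "\<dots> = a * l + (1 - l * m)" by (simp add: algebra_simps)
  also have "\<dots> = a * l" using lm by simp
  finally show ?thesis using l0 by simp
qed
lemma tl_gen2:
  fixes b l m E :: "'a::field"
  assumes l0: "l \<noteq> 0" and lm: "l * m = 1" and E: "E * (l - m) = b"
  shows "E * l - E / l = b"
proof -
  have "(E * l - E / l) * l = E * l * l - E" using l0 by (simp add: field_simps)
  also have "\<dots> = E * (l - m) * l + E * (l * m - 1)" by (simp add: algebra_simps)
  also have "\<dots> = b * l" using E lm by simp
  finally show ?thesis using l0 by simp
qed

lemma torus:
  fixes G :: "(('k::field)^2^2) set"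
  assumes G: "subgroup_SL2 G" and gG: "g \<in> G" and eig: "eigenvalue_ac g l"
    and nr: "\<forall>n>0. l ^ n \<noteq> 1"
  shows "\<exists>P Q. P ** Q = mat 1 \<and> Q ** P = mat 1 \<and>
           (\<forall>t. t \<noteq> 0 \<longrightarrow> P ** Dg t ** Q \<in> clo (ac_mat ` G)) \<and>
           infinite (UNIV :: 'k alg_closure set)"
proof -
  obtain a b c d where C: "ac_mat g = mk a b c d" using mk_cases by blast
  have det: "a * d - b * c = 1"
    using subgroup_det[OF G gG] ac_det[of g] C by simp
  have char: "(a - l) * (d - l) - b * c = 0"
    using eig C unfolding eigenvalue_ac_def by (simp add: mat_mk)
  have l0: "l \<noteq> 0"
  proof
    assume "l = 0" then show False using char det by simp
  qed
  define m where "m = 1 / l"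
  have lm: "l * m = 1" using l0 by (simp add: m_def)
  have lnm: "l - m \<noteq> 0"
  proof
    assume "l - m = 0"
    then have "l * l = 1" using lm by simp
    then have "l ^ 2 = 1" by (simp add: power2_eq_square)
    then show False using nr by auto
  qed
  have "l * l - (a + d) * l + 1 = ((a - l) * (d - l) - b * c) + (1 - (a * d - b * c))"
    by (simp add: algebra_simps)
  also have "\<dots> = 0" unfolding char det by simp
  finally have q: "l * l - (a + d) * l + 1 = 0" .
  have tr: "a + d = l + m"
  proof -
    have "(a + d) * l = (l * l + 1) - (l * l - (a + d) * l + 1)" by (simp add: algebra_simps)
    also have "\<dots> = l * l + 1" unfolding q by simp
    finally have adl: "(a + d) * l = l * l + 1" .
    have "a + d = ((a + d) * l) / l" using l0 by simp
    also have "\<dots> = (l * l + 1) / l" unfolding adl ..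
    also have "\<dots> = l * l / l + 1 / l" by (rule add_divide_distrib)
    also have "\<dots> = l + m" unfolding m_def using l0 by simp
    finally show ?thesis .
  qed
  define e where "e = (a - m) / (l - m)"
  define f where "f = b / (l - m)"
  define g' where "g' = c / (l - m)"
  define h where "h = (d - m) / (l - m)"
  have eh: "e + h = 1"
  proof -
    have "e + h = ((a - m) + (d - m)) / (l - m)" unfolding e_def h_def by (rule add_divide_distrib[symmetric])
    also have "(a - m) + (d - m) = l - m" using tr by (simp add: algebra_simps)
    finally show ?thesis using lnm by simp
  qed
  have efg: "e * h = f * g'"
  proof -
    have "(a - m) * (d - m) = b * c"
    proof -
      have "(a - m) * (d - m) = (a * d - b * c) + b * c - m * (a + d) + m * m" by (simp add: algebra_simps)
      also have "\<dots> = 1 + b * c - m * l - m * m + m * m" unfolding det tr by (simp add: algebra_simps)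
      also have "\<dots> = b * c" using lm by (simp add: algebra_simps)
      finally show ?thesis .
    qed
    then show ?thesis unfolding e_def f_def g'_def h_def times_divide_times_eq by simp
  qed
  have Tl: "Tor e f g' h l = ac_mat g"
  proof -
    have d': "d - m = l + m - a - m" using tr by (simp add: algebra_simps)
    have 1: "e * l + (1 - e) / l = a"
      by (rule tl_gen[OF l0 lm]) (use lnm in \<open>simp add: e_def\<close>)
    have 2: "f * l - f / l = b"
      by (rule tl_gen2[OF l0 lm]) (use lnm in \<open>simp add: f_def\<close>)
    have 3: "g' * l - g' / l = c"
      by (rule tl_gen2[OF l0 lm]) (use lnm in \<open>simp add: g'_def\<close>)
    have 4: "h * l + (1 - h) / l = d"
      by (rule tl_gen[OF l0 lm]) (use lnm in \<open>simp add: h_def\<close>)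
    show ?thesis unfolding C Tor_def using 1 2 3 4 by simp
  qed
  have Tn: "Tor e f g' h (l ^ n) = ac_mat (mpow g n)" for n
  proof (induction n)
    case 0 then show ?case by (simp add: Tor_one ac_one)
  next
    case (Suc n)
    have "Tor e f g' h (l ^ Suc n) = Tor e f g' h l ** Tor e f g' h (l ^ n)"
      using Tor_mult[OF eh efg l0, of "l ^ n"] l0 by simp
    also have "\<dots> = ac_mat (mpow g (Suc n))" unfolding Tl Suc by (simp add: ac_mult)
    finally show ?case .
  qed
  define Z where "Z = range (\<lambda>n::nat. l ^ n)"
  have infZ: "infinite Z" unfolding Z_def by (rule range_inj_infinite[OF pow_inj[OF l0 nr]])
  have TH: "Tor e f g' h t \<in> clo (ac_mat ` G)" if t: "t \<noteq> 0" for t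
    unfolding clo_def
  proof (intro CollectI ballI impI)
    fix p :: "_ \<Rightarrow> 'k alg_closure" assume p: "p \<in> poly_fun" and van: "\<forall>s\<in>ac_mat ` G. p s = 0"
    have "\<forall>z\<in>Z. z \<noteq> 0 \<and> p (Tor e f g' h z) = 0"
    proof
      fix z assume "z \<in> Z"
      then obtain n where z: "z = l ^ n" unfolding Z_def by blast
      have "p (Tor e f g' h z) = 0" unfolding z Tn using van subgroup_mpow[OF G gG, of n] by blast
      then show "z \<noteq> 0 \<and> p (Tor e f g' h z) = 0" using z l0 by simp
    qed
    then show "p (Tor e f g' h t) = 0" unfolding Tor_Lf by (rule laurent_vanish[OF p infZ _ t])
  qed
  obtain P Q where PQ: "P ** Q = mat 1" "Q ** P = mat 1"
    and Tdiag: "\<forall>t. t \<noteq> 0 \<longrightarrow> Tor e f g' h t = P ** Dg t ** Q"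
    using Tor_diag[OF eh efg] by (elim exE conjE)
  have inf: "infinite (UNIV :: 'k alg_closure set)" using infinite_super[OF subset_UNIV infZ] .
  have "\<forall>t. t \<noteq> 0 \<longrightarrow> P ** Dg t ** Q \<in> clo (ac_mat ` G)"
  proof (intro allI impI)
    fix t :: "'k alg_closure" assume t: "t \<noteq> 0"
    have "P ** Dg t ** Q = Tor e f g' h t" using Tdiag t by simp
    then show "P ** Dg t ** Q \<in> clo (ac_mat ` G)" using TH[OF t] by simp
  qed
  then show ?thesis using PQ inf by blast
qed


lemma clo_vanish: "A \<in> clo S \<Longrightarrow> p \<in> poly_fun \<Longrightarrow> (\<forall>s\<in>S. p s = 0) \<Longrightarrow> p A = 0"
  unfolding clo_def by blast

theorem lemma6p4:
  fixes G :: "(('k::field)^2^2) set"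
  assumes "subgroup_SL2 G"
    and "\<exists>g\<in>G. (\<exists>x. eigenvalue_ac g x) \<and>
                (\<forall>x. eigenvalue_ac g x \<longrightarrow> (\<forall>n>0. x ^ n \<noteq> 1))"
  shows "zariski_dense_SL2 G \<longleftrightarrow>
    (\<exists>a\<in>G. \<exists>b\<in>G.
       trace (mpow a 2 ** mpow b 2 ** mpow a 2 ** mpow b 2) - trace (mpow a 4 ** mpow b 4) \<noteq> 0)"
proof -
  note G = assms(1)
  obtain g where gG: "g \<in> G" and ex: "\<exists>x. eigenvalue_ac g x"
    and nrall: "\<forall>x. eigenvalue_ac g x \<longrightarrow> (\<forall>n>0. x ^ n \<noteq> 1)" using assms(2) by blast
  obtain l where eig: "eigenvalue_ac g l" using ex by blast
  have nr: "\<forall>n>0. l ^ n \<noteq> 1" using nrall eig by blast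
  obtain P Q where PQ: "P ** Q = mat 1" "Q ** P = mat 1"
    and TD: "\<forall>t. t \<noteq> 0 \<longrightarrow> P ** Dg t ** Q \<in> clo (ac_mat ` G)"
    and inf: "infinite (UNIV :: 'k alg_closure set)"
    using torus[OF G gG eig nr] by (elim exE conjE)
  have PQ': "P ** (Q ** R) = R" "Q ** (P ** R) = R" for R
    by (simp_all add: matrix_mul_assoc PQ)
  define S where "S = ac_mat ` G"
  have Sdet: "S \<subseteq> {A. det A = 1}" using subgroup_det[OF G] by (auto simp: S_def ac_det)
  have Smult: "\<forall>a\<in>S. \<forall>b\<in>S. a ** b \<in> S"
  proof (intro ballI)
    fix a b assume "a \<in> S" "b \<in> S"
    then obtain a1 b1 where "a1 \<in> G" "b1 \<in> G" "a = ac_mat a1" "b = ac_mat b1" unfolding S_def by blast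
    moreover have "a1 ** b1 \<in> G" using G \<open>a1 \<in> G\<close> \<open>b1 \<in> G\<close> unfolding subgroup_SL2_def by blast
    ultimately show "a ** b \<in> S" unfolding S_def by (simp add: ac_mult[symmetric])
  qed
  have Sadj: "\<forall>a\<in>S. adj2 a \<in> S"
  proof
    fix a assume "a \<in> S"
    then obtain a1 where a1: "a1 \<in> G" "a = ac_mat a1" unfolding S_def by blast
    then obtain b1 where b1: "b1 \<in> G" "a1 ** b1 = mat 1" using G unfolding subgroup_SL2_def by blast
    have "b1 = adj2 a1" by (rule inv_adj2[OF subgroup_det[OF G a1(1)] b1(2)])
    then have "adj2 a = ac_mat b1" using a1 by (simp add: ac_adj2)
    then show "adj2 a \<in> S" using b1 unfolding S_def by simp
  qed
  have Sone: "mat 1 \<in> S"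
  proof -
    have "mat 1 \<in> G" using G unfolding subgroup_SL2_def by blast
    then show ?thesis unfolding S_def using ac_one by (metis image_eqI)
  qed
  have dense: "zariski_dense_SL2 G \<longleftrightarrow> SL2 \<subseteq> clo S" unfolding S_def by (rule dense_iff)
  have l0: "l \<noteq> 0"
  proof
    assume "l = 0"
    then have "det (ac_mat g) = 0" using eig unfolding eigenvalue_ac_def by simp
    then show False using subgroup_det[OF G gG] by (simp add: ac_det)
  qed
  have PhiE: "(trace (mpow a 2 ** mpow b 2 ** mpow a 2 ** mpow b 2) - trace (mpow a 4 ** mpow b 4)) = Phi a b"
    for a b :: "'k^2^2" by (simp add: Phi_def)
  show ?thesis unfolding PhiE
  proof
    assume "zariski_dense_SL2 G"
    then have sub: "SL2 \<subseteq> clo S" using dense by simp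
    show "\<exists>a\<in>G. \<exists>b\<in>G. Phi a b \<noteq> 0"
    proof (rule ccontr)
      assume "\<not> (\<exists>a\<in>G. \<exists>b\<in>G. Phi a b \<noteq> 0)"
      then have z: "\<forall>a\<in>G. \<forall>b\<in>G. Phi a b = 0" by blast
      have s1: "Phi (ac_mat a) B = 0" if a: "a \<in> G" and B: "B \<in> SL2" for a and B :: "'k alg_closure^2^2"
      proof -
        have "\<forall>s\<in>S. Phi (ac_mat a) s = 0" unfolding S_def using z a by (auto simp: ac_Phi)
        moreover have "B \<in> clo S" using B sub by blast
        ultimately show ?thesis using clo_vanish[of B S "\<lambda>B. Phi (ac_mat a) B", OF _ pm_Phi_right] by blast
      qed
      have s2: "Phi A B = 0" if A: "A \<in> SL2" and B: "B \<in> SL2" for A B :: "'k alg_closure^2^2"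
      proof -
        have "\<forall>s\<in>S. Phi s B = 0" unfolding S_def using s1 B by auto
        moreover have "A \<in> clo S" using A sub by blast
        ultimately show ?thesis using clo_vanish[of A S "\<lambda>A. Phi A B", OF _ pm_Phi_left] by blast
      qed
      have "Dg l \<in> SL2" using l0 by (simp add: SL2_def Dg_def)
      moreover have "mk 1 1 (-1) 0 \<in> SL2" by (simp add: SL2_def)
      ultimately have "Phi (Dg l) (mk 1 1 (-1) 0) = 0" by (rule s2)
      then have "(l * l - 1 / (l * l))^2 = 0" using Phi_example[OF l0] by simp
      then have "l * l - 1 / (l * l) = 0" by simp
      then have "l * l * (l * l) = 1" using l0 by (simp add: field_simps)
      then have "l ^ 4 = 1" by (simp add: eval_nat_numeral algebra_simps)
      then show False using nr by auto
    qed
  next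
    assume "\<exists>a\<in>G. \<exists>b\<in>G. Phi a b \<noteq> 0"
    then obtain a0 b0 where a0: "a0 \<in> G" and b0: "b0 \<in> G" and Ph: "Phi a0 b0 \<noteq> 0" by blast
    define H where "H = {A. P ** A ** Q \<in> clo S}"
    have detPQ: "det P * det Q = 1" using PQ(1) det_mul[of P Q] by simp
    have Hdet: "det A = 1" if "A \<in> H" for A
    proof -
      have "det (P ** A ** Q) = 1" using that clo_SL2[OF Sdet] unfolding H_def by blast
      then have "det A * (det P * det Q) = 1" by (simp add: det_mul algebra_simps)
      then show ?thesis using detPQ by simp
    qed
    have "grp H"
      unfolding grp_def
    proof (intro conjI ballI allI impI)
      fix A assume "A \<in> H" then show "det A = 1" by (rule Hdet)
    next
      show "mat 1 \<in> H" unfolding H_def using PQ(1) clo_sup Sone by auto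
    next
      fix A B assume A: "A \<in> H" and B: "B \<in> H"
      have "P ** (A ** B) ** Q = (P ** A ** Q) ** (P ** B ** Q)"
        by (simp add: matrix_mul_assoc[symmetric] PQ')
      then show "A ** B \<in> H" using A B clo_mult[OF Smult] unfolding H_def by simp
    next
      fix A assume A: "A \<in> H"
      define Xm where "Xm = P ** A ** Q"
      have XH: "Xm \<in> clo S" using A unfolding H_def Xm_def by simp
      have dX: "det Xm = 1" using XH clo_SL2[OF Sdet] by blast
      have dA: "det A = 1" using A Hdet by blast
      have "Xm ** (P ** adj2 A ** Q) = mat 1"
      proof -
        have "Xm ** (P ** adj2 A ** Q) = P ** ((A ** adj2 A) ** Q)"
          unfolding Xm_def by (simp add: matrix_mul_assoc[symmetric] PQ')
        also have "\<dots> = mat 1" using adj2_right[OF dA] PQ(1) by simp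
        finally show ?thesis .
      qed
      then have "P ** adj2 A ** Q = adj2 Xm" by (rule inv_adj2[OF dX])
      moreover have "adj2 Xm \<in> clo S" using clo_adj2[OF Sadj XH] .
      ultimately show "adj2 A \<in> H" unfolding H_def by simp
    next
      fix t :: "'k alg_closure" assume "t \<noteq> 0"
      then show "Dg t \<in> H" using TD unfolding H_def S_def by blast
    qed
    have conjH: "Q ** ac_mat c ** P \<in> H" if "c \<in> G" for c
    proof -
      have "P ** (Q ** ac_mat c ** P) ** Q = ac_mat c"
        by (simp add: matrix_mul_assoc[symmetric] PQ' PQ)
      moreover have "ac_mat c \<in> clo S" using that clo_sup unfolding S_def by blast
      ultimately show ?thesis unfolding H_def by simp
    qed
    have PhH: "Phi (Q ** ac_mat a0 ** P) (Q ** ac_mat b0 ** P) \<noteq> 0"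
      unfolding Phi_conj[OF PQ(1)] ac_Phi using Ph by simp
    have "SL2 \<subseteq> clo S"
    proof
      fix B :: "'k alg_closure^2^2" assume B: "B \<in> SL2"
      have "det (Q ** B ** P) = 1" using B detPQ unfolding SL2_def by (simp add: det_mul algebra_simps)
      then have "Q ** B ** P \<in> H" by (rule main[OF \<open>grp H\<close> inf conjH[OF a0] conjH[OF b0] PhH])
      moreover have "P ** (Q ** B ** P) ** Q = B" by (simp add: matrix_mul_assoc[symmetric] PQ' PQ)
      ultimately show "B \<in> clo S" unfolding H_def by simp
    qed
    then show "zariski_dense_SL2 G" using dense by simp
  qed
qed


end
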